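(* Let $\beta>0$, $\gamma>0$, $\alpha_I\in(0,1]$, $d\ge0$, and let $q$ be a probability measure on $(0,\infty)$ (absolutely continuous part plus finitely many atoms, finite mean $T_q$). Fix $r^\star>0$, let $\mathcal C_1=(0,r^\star]$, $\mathcal C_2=(r^\star,\infty)$, $p^i=q(\mathcal C_i)>0$, $q^i(I)=q(I\cap\mathcal C_i)/p^i$ with mean $T_{q^i}$. For $d>0$ set $$\mu^{\rm in}=\frac{d}{1-\hat q(d)},\quad \mu^{{\rm in},i}=\frac{d}{1-\hat q^i(d)},\quad \pi^i=p^i\frac{1-\hat q^i(d)}{1-\hat q(d)}\quad(i=1,2),$$ with $\hat\nu(d)=\int e^{-dr}\nu(dr)$, and for $d=0$ set $\mu^{\rm in}=1/T_q$, $\mu^{{\rm in},i}=1/T_{q^i}$, $\pi^i=p^iT_{q^i}/T_q$. Assume $\mu^{{\rm in},i}>0$, $i=1,2$. Let $x^\star$ be the nonnegative equilibrium of the single-class SIS equation $$\dot x=\alpha_I\mu^{\rm in}+\beta x(1-x)-(\gamma+\mu^{\rm in})x,$$ i.e. $x^\star=\frac1{2\beta}\Big[(\beta-\gamma-\mu^{\rm in})+\sqrt{(\beta-\gamma-\mu^{\rm in})^2+4\alpha_I\mu^{\rm in}\beta}\Big]$, and let $(x_1^\star,x_2^\star)$ with $x_1^\star,x_2^\star\ge0$ be an equilibrium of the two-class SIS system $$\dot x^i=\alpha_I\pi^i\mu^{{\rm in},i}+\beta(x^1+x^2)(\pi^i-x^i)-(\gamma+\mu^{{\rm in},i})x^i,\qquad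 i=1,2,$$ and $\omega^\star=x_1^\star+x_2^\star$. Then $x^\star>0$ and $\omega^\star>0$. Moreover, $x^\star<\omega^\star$ (respectively $x^\star>\omega^\star$, $x^\star=\omega^\star$) if and only if $\alpha_I<1-\frac{\gamma}{\beta}$ (respectively $\alpha_I>1-\frac\gamma\beta$, $\alpha_I=1-\frac\gamma\beta$).
   Context: Interpretation: $x$ is the proportion of infective inmates in the prison at population equilibrium when sentence-length structure is ignored; $x^i$ is the proportion (relative to the total prison population) of infective inmates with initial sentence length in class $\mathcal C_i$ (short/long sentences); $\alpha_I$ is the infective proportion among new inmates, $\beta$ the contact rate, $\gamma$ the recovery rate, $d$ the removal rate common to both classes. The case $d=0$ is defined by the stated limiting values. *)

theory Defs
  imports "HOL-Probability.Probability"
begin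

definition laplace :: "real measure \<Rightarrow> real \<Rightarrow> real" where
  "laplace \<nu> d = (\<integral>r. exp (- d * r) \<partial>\<nu>)"

definition mean :: "real measure \<Rightarrow> real" where
  "mean \<nu> = (\<integral>r. r \<partial>\<nu>)"

definition cond_measure :: "real measure \<Rightarrow> real set \<Rightarrow> real measure" where
  "cond_measure q C = density q (\<lambda>r. ennreal (indicator C r / measure q C))"

definition mu_in :: "real measure \<Rightarrow> real \<Rightarrow> real" where
  "mu_in \<nu> d = (if d > 0 then d / (1 - laplace \<nu> d) else 1 / mean \<nu>)"

definition pi_class :: "real measure \<Rightarrow> real set \<Rightarrow> real \<Rightarrow> real" where
  "pi_class q C d = (let p = measure q C; qi = cond_measure q C in
     if d > 0 then p * (1 - laplace qi d) / (1 - laplace q d)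
     else p * mean qi / mean q)"

definition x_star :: "real \<Rightarrow> real \<Rightarrow> real \<Rightarrow> real \<Rightarrow> real" where
  "x_star \<alpha>I \<beta> \<gamma> \<mu> = (1 / (2 * \<beta>)) *
     ((\<beta> - \<gamma> - \<mu>) + sqrt ((\<beta> - \<gamma> - \<mu>)^2 + 4 * \<alpha>I * \<mu> * \<beta>))"

end

theory Submission
  imports Defs
begin

lemma core:
  fixes a b g m1 m2 p1 p2 x1 x2 :: real
  assumes a: "0 < a" "a \<le> 1" and b: "b > 0" and g: "g > 0"
    and m1: "m1 > 0" and m2: "m2 > 0" and mne: "m1 \<noteq> m2"
    and p1: "p1 > 0" and p2: "p2 > 0" and ps: "p1 + p2 = 1"
    and x1: "x1 \<ge> 0" and x2: "x2 \<ge> 0"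
    and e1: "a * p1 * m1 + b * (x1 + x2) * (p1 - x1) - (g + m1) * x1 = 0"
    and e2: "a * p2 * m2 + b * (x1 + x2) * (p2 - x2) - (g + m2) * x2 = 0"
    and mdef: "m = p1 * m1 + p2 * m2"
  shows "x_star a b g m > 0 \<and> x1 + x2 > 0 \<and>
         (x_star a b g m < x1 + x2 \<longleftrightarrow> a < 1 - g / b) \<and>
         (x_star a b g m > x1 + x2 \<longleftrightarrow> a > 1 - g / b) \<and>
         (x_star a b g m = x1 + x2 \<longleftrightarrow> a = 1 - g / b)"
proof -
  define w where "w = x1 + x2"
  define x where "x = x_star a b g m"
  have mpos: "m > 0" using mdef p1 p2 m1 m2 by (simp add: add_pos_pos)
  have wpos: "w > 0"
  proof (rule ccontr)
    assume "\<not> w > 0"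
    then have "x1 = 0" using x1 x2 w_def by linarith
    moreover have "x2 = 0" using \<open>\<not> w > 0\<close> x1 x2 w_def by linarith
    ultimately have "a * p1 * m1 = 0" using e1 by simp
    then show False using a p1 m1 by simp
  qed
  define D1 where "D1 = b * w + g + m1"
  define D2 where "D2 = b * w + g + m2"
  define D where "D = b * w + g + m"
  have bwp: "b * w > 0" using b wpos by simp
  have D1: "D1 > g" using D1_def bwp m1 by linarith
  have D2: "D2 > g" using D2_def bwp m2 by linarith
  have DD0: "p1 * D1 + p2 * D2 = (p1 + p2) * (b * w + g) + (p1 * m1 + p2 * m2)"
    unfolding D1_def D2_def by (simp add: algebra_simps)
  have DD: "D = p1 * D1 + p2 * D2" using DD0 ps mdef D_def by simp
  define phi where "phi = a * g - b * (1 - a) * w"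
  define S where "S = p1 / D1 + p2 / D2"
  have x1e: "x1 * D1 = p1 * (a * D1 - phi)"
    using e1 unfolding D1_def phi_def w_def by (simp add: algebra_simps)
  have x2e: "x2 * D2 = p2 * (a * D2 - phi)"
    using e2 unfolding D2_def phi_def w_def by (simp add: algebra_simps)
  have x1e': "x1 = p1 * a - p1 * phi / D1" using x1e D1 g
    by (simp add: field_simps)
  have x2e': "x2 = p2 * a - p2 * phi / D2" using x2e D2 g
    by (simp add: field_simps)
  have key0: "x1 + x2 = (p1 + p2) * a - phi * S"
    using x1e' x2e' unfolding S_def by (simp add: algebra_simps)
  have key: "a - w = phi * S"
    using key0 ps unfolding w_def by simp
  have Spos: "S > 0"
  proof -
    have "p1 / D1 > 0" "p2 / D2 > 0" using p1 p2 D1 D2 g by simp_all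
    then show ?thesis unfolding S_def by simp
  qed
  have Sg: "S * g < 1"
  proof -
    have "p1 / D1 < p1 / g" using p1 D1 g by (simp add: divide_strict_left_mono)
    moreover have "p2 / D2 < p2 / g" using p2 D2 g by (simp add: divide_strict_left_mono)
    ultimately have "S < (p1 + p2) / g" unfolding S_def by (simp add: add_divide_distrib)
    then show ?thesis using ps g by (simp add: field_simps)
  qed
  have D1ne: "D1 \<noteq> D2" using mne D1_def D2_def by simp
  have SD: "S * D > 1"
  proof -
    have D1n: "D1 \<noteq> 0" "D2 \<noteq> 0" using D1 D2 g by auto
    have p2e: "p2 = 1 - p1" using ps by simp
    have "S * D - 1 = p1 * p2 * (D1 - D2)^2 / (D1 * D2)"
      unfolding DD S_def p2e using D1n p2e
      by (simp add: field_simps power2_eq_square)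
    moreover have "p1 * p2 * (D1 - D2)^2 / (D1 * D2) > 0"
      using p1 p2 D1ne D1 D2 g by simp
    ultimately show ?thesis by linarith
  qed
  define P where "P = (\<lambda>t. b * t^2 + (g + m - b) * t - a * m)"
  have Pw: "P w = phi * (1 - S * D)"
  proof -
    have "P w = (w - a) * D + phi" unfolding P_def D_def phi_def by (simp add: algebra_simps power2_eq_square)
    then show ?thesis using key by (simp add: algebra_simps)
  qed
  define bb where "bb = b - g - m"
  have disc: "sqrt (bb^2 + 4 * a * m * b) > \<bar>bb\<bar>"
  proof -
    have "bb^2 < bb^2 + 4 * a * m * b" using a mpos b by simp
    then have "sqrt (bb^2) < sqrt (bb^2 + 4 * a * m * b)" by (rule real_sqrt_less_mono)
    then show ?thesis by simp
  qed
  have xdef: "x = (bb + sqrt (bb^2 + 4 * a * m * b)) / (2 * b)"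
    unfolding x_def x_star_def bb_def by simp
  have xpos: "x > 0"
  proof -
    have "bb + sqrt (bb^2 + 4 * a * m * b) > 0" using disc abs_ge_minus_self[of bb] by linarith
    then show ?thesis unfolding xdef using b by simp
  qed
  have Px: "P x = 0"
  proof -
    define s where "s = sqrt (bb^2 + 4 * a * m * b)"
    have n1: "0 \<le> bb^2" by simp
    have n2: "0 \<le> 4 * a * m * b" using a mpos b by simp
    have s2: "s^2 = bb^2 + 4 * a * m * b" unfolding s_def
      by (rule real_sqrt_pow2) (use n1 n2 in linarith)
    have "P x = b * x^2 - bb * x - a * m" unfolding P_def bb_def by (simp add: algebra_simps)
    also have "\<dots> = (s^2 - (bb^2 + 4 * a * m * b)) / (4 * b)"
      unfolding xdef s_def[symmetric] using b
      by (simp add: field_simps power2_eq_square)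
    finally show ?thesis using s2 by simp
  qed
  have Psign: "P t = (t - x) * (b * (t + x) + g + m - b)" for t
    using Px unfolding P_def by (simp add: algebra_simps power2_eq_square)
  have coefpos: "b * (w + x) + g + m - b > 0"
  proof -
    have xe: "x * (b * x + g + m - b) = a * m" using Px unfolding P_def by (simp add: algebra_simps power2_eq_square)
    have am: "a * m > 0" using a mpos by simp
    have h: "b * x + g + m - b > 0" using zero_less_mult_pos[of x "b * x + g + m - b"] xpos xe am by simp
    have bw: "b * w > 0" using b wpos by simp
    have "b * (w + x) + g + m - b = (b * x + g + m - b) + b * w" by (simp add: algebra_simps)
    then show ?thesis using h bw by linarith
  qed
  have sgn: "(w > x \<longleftrightarrow> P w > 0) \<and> (w < x \<longleftrightarrow> P w < 0)"
    using Psign[of w] coefpos by (simp add: zero_less_mult_iff mult_less_0_iff)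
  have cond: "(a < 1 - g / b \<longleftrightarrow> b * (1 - a) - g > 0) \<and> (a > 1 - g / b \<longleftrightarrow> b * (1 - a) - g < 0)"
    using b by (simp add: field_simps)
  have c1: "phi < 0" if "b * (1 - a) - g > 0"
  proof (rule ccontr)
    assume "\<not> phi < 0"
    have ge: "g * (a - w) = (S * g) * phi" using key by (simp add: algebra_simps)
    have "(S * g) * phi \<le> 1 * phi" by (rule mult_right_mono) (use Sg \<open>\<not> phi < 0\<close> in auto)
    then have "g * (a - w) \<le> phi" by (simp only: ge mult_1)
    then have "(b * (1 - a) - g) * w \<le> 0" unfolding phi_def by (simp add: algebra_simps)
    then show False using that wpos by (simp add: mult_le_0_iff)
  qed
  have c2: "phi > 0" if "b * (1 - a) - g < 0"
  proof (rule ccontr)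
    assume "\<not> phi > 0"
    have ge: "g * (a - w) = (S * g) * phi" using key by (simp add: algebra_simps)
    have "1 * phi \<le> (S * g) * phi" by (rule mult_right_mono_neg) (use Sg \<open>\<not> phi > 0\<close> in auto)
    then have "g * (a - w) \<ge> phi" by (simp only: ge mult_1)
    then have "(b * (1 - a) - g) * w \<ge> 0" unfolding phi_def by (simp add: algebra_simps)
    then show False using that wpos by (simp add: zero_le_mult_iff)
  qed
  have c3: "phi = 0" if "b * (1 - a) - g = 0"
  proof -
    have bg: "b * (1 - a) = g" using that by simp
    have bgw: "b * (1 - a) * w = g * w" by (rule arg_cong[where f="\<lambda>t. t * w", OF bg])
    have "phi = a * g - g * w" by (simp only: phi_def bgw)
    then have pg: "phi = g * (a - w)" by (simp add: algebra_simps)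
    have "a - w = g * (a - w) * S" using key pg by simp
    then have "(a - w) * (1 - g * S) = 0" by (simp add: algebra_simps)
    moreover have "1 - g * S \<noteq> 0" using Sg by (simp add: mult.commute)
    ultimately have "a = w" by simp
    then show ?thesis using pg by simp
  qed
  have r1: "b * (1 - a) - g > 0 \<Longrightarrow> w > x" using c1 Pw SD sgn by (simp add: mult_neg_neg)
  have r2: "b * (1 - a) - g < 0 \<Longrightarrow> w < x" using c2 Pw SD sgn by (simp add: mult_pos_neg)
  have r3: "b * (1 - a) - g = 0 \<Longrightarrow> w = x" using c3 Pw sgn by simp
  have tri: "b * (1 - a) - g > 0 \<or> b * (1 - a) - g < 0 \<or> b * (1 - a) - g = 0" by linarith
  have c4: "a = 1 - g / b \<longleftrightarrow> b * (1 - a) - g = 0" using b by (auto simp: field_simps)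
  have main: "(x < w \<longleftrightarrow> a < 1 - g / b) \<and> (w < x \<longleftrightarrow> a > 1 - g / b) \<and> (x = w \<longleftrightarrow> a = 1 - g / b)"
    using tri r1 r2 r3 cond c4 by auto
  show ?thesis using xpos wpos main unfolding x_def w_def by simp
qed

lemma bm_q: "sets q = sets borel \<Longrightarrow> borel_measurable q = borel_measurable borel"
  by (rule measurable_cong_sets) auto

lemma cond_int:
  fixes q :: "real measure"
  assumes sq: "sets q = sets borel" and C: "C \<in> sets borel" and p: "measure q C > 0"
    and f: "f \<in> borel_measurable borel"
  shows "integral\<^sup>L (cond_measure q C) f = (\<integral>r. indicator C r * f r \<partial>q) / measure q C"
proof -
  have fm: "f \<in> borel_measurable q" using f by (simp add: measurable_cong_sets[OF sq refl])
  have gm: "(\<lambda>r. indicator C r / measure q C) \<in> borel_measurable q"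
    using C by (simp add: measurable_cong_sets[OF sq refl])
  have "integral\<^sup>L (cond_measure q C) f = (\<integral>r. (indicator C r / measure q C) *\<^sub>R f r \<partial>q)"
    unfolding cond_measure_def
    by (rule integral_density[OF fm gm]) (use p in auto)
  also have "\<dots> = (\<integral>r. indicator C r * f r / measure q C \<partial>q)" by simp
  also have "\<dots> = (\<integral>r. indicator C r * f r \<partial>q) / measure q C" by (rule integral_divide_zero)
  finally show ?thesis .
qed

lemma split_int:
  fixes q :: "real measure" and f :: "real \<Rightarrow> real"
  assumes sq: "sets q = sets borel" and ae: "AE r in q. r > 0" and rs: "rs > 0"
    and f: "integrable q f"
  shows "integral\<^sup>L q f = (\<integral>r. indicator {0<..rs} r * f r \<partial>q) + (\<integral>r. indicator {rs<..} r * f r \<partial>q)"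
proof -
  have fm: "f \<in> borel_measurable q" using f by simp
  have s1: "{0<..rs} \<in> sets q" "{rs<..} \<in> sets q" using sq by auto
  have i1: "integrable q (\<lambda>r. indicator {0<..rs} r *\<^sub>R f r)"
    using integrable_mult_indicator[OF s1(1) f] .
  have i2: "integrable q (\<lambda>r. indicator {rs<..} r *\<^sub>R f r)"
    using integrable_mult_indicator[OF s1(2) f] .
  have "integral\<^sup>L q f = (\<integral>r. indicator {0<..rs} r * f r + indicator {rs<..} r * f r \<partial>q)"
  proof (rule integral_cong_AE)
    show "f \<in> borel_measurable q" by fact
    show "(\<lambda>r. indicator {0<..rs} r * f r + indicator {rs<..} r * f r) \<in> borel_measurable q"
      using i1 i2 by simp
    show "AE x in q. f x = indicator {0<..rs} x * f x + indicator {rs<..} x * f x"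
      using ae by eventually_elim (auto split: split_indicator)
  qed
  also have "\<dots> = (\<integral>r. indicator {0<..rs} r * f r \<partial>q) + (\<integral>r. indicator {rs<..} r * f r \<partial>q)"
    using i1 i2 by (simp add: Bochner_Integration.integral_add)
  finally show ?thesis .
qed

lemma strict_pos:
  fixes q :: "real measure" and h :: "real \<Rightarrow> real"
  assumes sq: "sets q = sets borel" and C: "C \<in> sets borel" and p: "measure q C > 0"
    and hi: "integrable q h" and h0: "\<And>r. h r \<ge> 0" and hC: "\<And>r. r \<in> C \<Longrightarrow> h r > 0"
  shows "integral\<^sup>L q h > 0"
proof -
  have ge: "integral\<^sup>L q h \<ge> 0" using h0 by simp
  have "integral\<^sup>L q h \<noteq> 0"
  proof
    assume "integral\<^sup>L q h = 0"
    then have "AE r in q. h r = 0" using integral_nonneg_eq_0_iff_AE[OF hi] h0 by simp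
    then have "AE r in q. r \<notin> C" by eventually_elim (metis hC less_irrefl)
    moreover have "{x \<in> space q. \<not> x \<notin> C} = C" using sets_eq_imp_space_eq[OF sq] by auto
    ultimately have "emeasure q C = 0" using AE_iff_measurable[of C q "\<lambda>x. x \<notin> C"] C sq by simp
    then show False using p by (simp add: measure_def)
  qed
  then show ?thesis using ge by simp
qed

lemma ind_diff:
  fixes q :: "real measure" and f :: "real \<Rightarrow> real"
  assumes "prob_space q" and C: "C \<in> sets q" and f: "integrable q f"
  shows "integrable q (\<lambda>r. indicator C r * (f r - k))"
    and "(\<integral>r. indicator C r * (f r - k) \<partial>q) = (\<integral>r. indicator C r * f r \<partial>q) - k * measure q C"
proof -
  interpret prob_space q by fact
  have fk: "integrable q (\<lambda>r. f r - k)" using f by simp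
  show "integrable q (\<lambda>r. indicator C r * (f r - k))"
    using integrable_mult_indicator[OF C fk] by simp
  have i1: "integrable q (\<lambda>r. indicator C r * f r)"
    using integrable_mult_indicator[OF C f] by simp
  have i2: "integrable q (\<lambda>r. k * indicator C r)"
    using integrable_mult_indicator[OF C integrable_const[of k]] by (simp add: mult.commute)
  have "(\<integral>r. indicator C r * (f r - k) \<partial>q) = (\<integral>r. indicator C r * f r - k * indicator C r \<partial>q)"
    by (simp add: algebra_simps)
  also have "\<dots> = (\<integral>r. indicator C r * f r \<partial>q) - (\<integral>r. k * indicator C r \<partial>q)"
    using i1 i2 by (rule Bochner_Integration.integral_diff)
  also have "(\<integral>r. k * indicator C r \<partial>q) = k * measure q C"
    using C by (simp add: sets.Int_space_eq2)
  finally show "(\<integral>r. indicator C r * (f r - k) \<partial>q) = (\<integral>r. indicator C r * f r \<partial>q) - k * measure q C" .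
qed

lemma bridge:
  fixes p1 p2 A1 A2 c :: real
  assumes "p1 > 0" "p2 > 0" "p1 + p2 = 1" "A1 > 0" "A2 > 0" "c > 0"
  shows "p1 * A1 / (p1 * A1 + p2 * A2) + p2 * A2 / (p1 * A1 + p2 * A2) = 1"
    and "c / (p1 * A1 + p2 * A2) = (p1 * A1 / (p1 * A1 + p2 * A2)) * (c / A1) + (p2 * A2 / (p1 * A1 + p2 * A2)) * (c / A2)"
    and "p1 * A1 / (p1 * A1 + p2 * A2) > 0" "p2 * A2 / (p1 * A1 + p2 * A2) > 0"
    and "A1 \<noteq> A2 \<Longrightarrow> c / A1 \<noteq> c / A2"
proof -
  have Z: "p1 * A1 + p2 * A2 > 0" using assms by (simp add: add_pos_pos)
  show "p1 * A1 / (p1 * A1 + p2 * A2) + p2 * A2 / (p1 * A1 + p2 * A2) = 1"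
    using Z by (simp add: add_divide_distrib[symmetric])
  have e1: "(p1 * A1 / (p1 * A1 + p2 * A2)) * (c / A1) = p1 * c / (p1 * A1 + p2 * A2)"
    using assms by (simp add: field_simps)
  have e2: "(p2 * A2 / (p1 * A1 + p2 * A2)) * (c / A2) = p2 * c / (p1 * A1 + p2 * A2)"
    using assms by (simp add: field_simps)
  have e3: "p1 * c / (p1 * A1 + p2 * A2) + p2 * c / (p1 * A1 + p2 * A2) = (p1 + p2) * c / (p1 * A1 + p2 * A2)"
    by (simp add: add_divide_distrib[symmetric] algebra_simps)
  show "c / (p1 * A1 + p2 * A2) = (p1 * A1 / (p1 * A1 + p2 * A2)) * (c / A1) + (p2 * A2 / (p1 * A1 + p2 * A2)) * (c / A2)"
    using e1 e2 e3 assms(3) by simp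
  show "p1 * A1 / (p1 * A1 + p2 * A2) > 0" "p2 * A2 / (p1 * A1 + p2 * A2) > 0"
    using Z assms by simp_all
  show "A1 \<noteq> A2 \<Longrightarrow> c / A1 \<noteq> c / A2" using assms by (simp add: field_simps)
qed

lemma exp_int:
  fixes q :: "real measure"
  assumes "prob_space q" and sq: "sets q = sets borel" and ae: "AE r in q. r > 0" and d: "d \<ge> 0"
  shows "integrable q (\<lambda>r. exp (- d * r))"
proof -
  interpret prob_space q by fact
  have fq: "(\<lambda>r. exp (- d * r)) \<in> borel_measurable q"
    by (simp add: measurable_cong_sets[OF sq refl])
  have bnd: "norm (exp (- d * x)) \<le> norm (1::real)" if "x > 0" for x
    using d that by simp
  have aeb: "AE x in q. norm (exp (- d * x)) \<le> norm (1::real)" using eventually_mono[OF ae bnd] .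
  have one: "integrable q (\<lambda>x. 1::real)" by simp
  show ?thesis using Bochner_Integration.integrable_bound[OF one fq aeb] .
qed

theorem proposition3p1:
  fixes q :: "real measure" and \<beta> \<gamma> \<alpha>I d rstar x1 x2 :: real
  assumes prob: "prob_space q"
    and sets_q: "sets q = sets borel"
    and supp: "measure q {..0} = 0"
    and decomp: "\<exists>(f :: real \<Rightarrow> ennreal) (A :: real set) (w :: real \<Rightarrow> ennreal).
        f \<in> borel_measurable borel \<and> finite A \<and>
        (\<forall>S \<in> sets borel. emeasure q S = (\<integral>\<^sup>+ r\<in>S. f r \<partial>lborel) + (\<Sum>a\<in>A \<inter> S. w a))"
    and fin_mean: "integrable q (\<lambda>r. r)"
    and \<beta>_pos: "\<beta> > 0" and \<gamma>_pos: "\<gamma> > 0"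
    and \<alpha>I: "0 < \<alpha>I" "\<alpha>I \<le> 1"
    and d_nonneg: "d \<ge> 0"
    and rstar: "rstar > 0"
    and p1: "measure q {0<..rstar} > 0"
    and p2: "measure q {rstar<..} > 0"
    and mu1: "mu_in (cond_measure q {0<..rstar}) d > 0"
    and mu2: "mu_in (cond_measure q {rstar<..}) d > 0"
    and x1_nonneg: "x1 \<ge> 0" and x2_nonneg: "x2 \<ge> 0"
    and eq1: "\<alpha>I * pi_class q {0<..rstar} d * mu_in (cond_measure q {0<..rstar}) d
              + \<beta> * (x1 + x2) * (pi_class q {0<..rstar} d - x1)
              - (\<gamma> + mu_in (cond_measure q {0<..rstar}) d) * x1 = 0"
    and eq2: "\<alpha>I * pi_class q {rstar<..} d * mu_in (cond_measure q {rstar<..}) d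
              + \<beta> * (x1 + x2) * (pi_class q {rstar<..} d - x2)
              - (\<gamma> + mu_in (cond_measure q {rstar<..}) d) * x2 = 0"
  shows "x_star \<alpha>I \<beta> \<gamma> (mu_in q d) > 0 \<and> x1 + x2 > 0 \<and>
         (x_star \<alpha>I \<beta> \<gamma> (mu_in q d) < x1 + x2 \<longleftrightarrow> \<alpha>I < 1 - \<gamma> / \<beta>) \<and>
         (x_star \<alpha>I \<beta> \<gamma> (mu_in q d) > x1 + x2 \<longleftrightarrow> \<alpha>I > 1 - \<gamma> / \<beta>) \<and>
         (x_star \<alpha>I \<beta> \<gamma> (mu_in q d) = x1 + x2 \<longleftrightarrow> \<alpha>I = 1 - \<gamma> / \<beta>)"
proof -
  have fm: "finite_measure q" using prob by (rule prob_space.axioms(1))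
  define C1 where "C1 = {0<..rstar}"
  define C2 where "C2 = {rstar<..}"
  define p1 where "p1 = measure q C1"
  define p2 where "p2 = measure q C2"
  have sp: "space q = UNIV" using sets_eq_imp_space_eq[OF sets_q] by simp
  have C1s: "C1 \<in> sets borel" "C1 \<in> sets q" using sets_q by (auto simp: C1_def)
  have C2s: "C2 \<in> sets borel" "C2 \<in> sets q" using sets_q by (auto simp: C2_def)
  have N0: "{..0::real} \<in> sets q" using sets_q by simp
  have p1pos: "p1 > 0" using p1 by (simp add: p1_def C1_def)
  have p2pos: "p2 > 0" using p2 by (simp add: p2_def C2_def)
  have ae: "AE r in q. r > 0"
  proof -
    have "emeasure q {..0} = 0" using supp by (simp add: finite_measure.emeasure_eq_measure[OF fm])
    moreover have "{x \<in> space q. \<not> 0 < x} = {..0::real}" using sp by auto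
    ultimately show ?thesis using AE_iff_measurable[OF N0, of "\<lambda>x. 0 < x"] by simp
  qed
  have psum: "p1 + p2 = 1"
  proof -
    have "measure q (C1 \<union> C2) = p1 + p2" unfolding p1_def p2_def
      by (rule finite_measure.finite_measure_Union[OF fm C1s(2) C2s(2)]) (auto simp: C1_def C2_def)
    moreover have "measure q ({..0} \<union> (C1 \<union> C2)) = measure q {..0} + measure q (C1 \<union> C2)"
      by (rule finite_measure.finite_measure_Union[OF fm]) (use N0 C1s C2s rstar in \<open>auto simp: C1_def C2_def\<close>)
    moreover have "{..0} \<union> (C1 \<union> C2) = space q" using sp rstar by (auto simp: C1_def C2_def)
    ultimately show ?thesis using supp prob_space.prob_space[OF prob] by simp
  qed
  have key: "\<exists>A1 A2 c. A1 > 0 \<and> A2 > 0 \<and> c > 0 \<and> A1 \<noteq> A2 \<and>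
      mu_in q d = c / (p1 * A1 + p2 * A2) \<and>
      mu_in (cond_measure q C1) d = c / A1 \<and> mu_in (cond_measure q C2) d = c / A2 \<and>
      pi_class q C1 d = p1 * A1 / (p1 * A1 + p2 * A2) \<and>
      pi_class q C2 d = p2 * A2 / (p1 * A1 + p2 * A2)"
  proof (cases "d > 0")
    case True
    define f where "f = (\<lambda>r::real. exp (- d * r))"
    have fb: "f \<in> borel_measurable borel" unfolding f_def by simp
    have fi: "integrable q f" unfolding f_def using exp_int[OF prob sets_q ae d_nonneg] .
    define I1 where "I1 = (\<integral>r. indicator C1 r * f r \<partial>q)"
    define I2 where "I2 = (\<integral>r. indicator C2 r * f r \<partial>q)"
    have L: "laplace q d = I1 + I2" unfolding laplace_def I1_def I2_def C1_def C2_def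
      using split_int[OF sets_q ae rstar fi] by (simp add: f_def)
    have L1: "laplace (cond_measure q C1) d = I1 / p1" unfolding laplace_def I1_def p1_def
      using cond_int[OF sets_q C1s(1) p1pos[unfolded p1_def] fb] by (simp add: f_def)
    have L2: "laplace (cond_measure q C2) d = I2 / p2" unfolding laplace_def I2_def p2_def
      using cond_int[OF sets_q C2s(1) p2pos[unfolded p2_def] fb] by (simp add: f_def)
    define A1 where "A1 = 1 - I1 / p1"
    define A2 where "A2 = 1 - I2 / p2"
    have m1: "mu_in (cond_measure q C1) d = d / A1" using True L1 by (simp add: mu_in_def A1_def)
    have m2: "mu_in (cond_measure q C2) d = d / A2" using True L2 by (simp add: mu_in_def A2_def)
    have A1pos: "A1 > 0" using mu1 m1 True unfolding C1_def by (simp add: zero_less_divide_iff)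
    have A2pos: "A2 > 0" using mu2 m2 True unfolding C2_def by (simp add: zero_less_divide_iff)
    have Z: "1 - laplace q d = p1 * A1 + p2 * A2" unfolding L A1_def A2_def
      using p1pos p2pos psum by (simp add: algebra_simps)
    have m: "mu_in q d = d / (p1 * A1 + p2 * A2)" using True Z by (simp add: mu_in_def)
    have pc1: "pi_class q C1 d = p1 * A1 / (p1 * A1 + p2 * A2)"
      using True Z L1 by (simp add: pi_class_def Let_def p1_def A1_def)
    have pc2: "pi_class q C2 d = p2 * A2 / (p1 * A1 + p2 * A2)"
      using True Z L2 by (simp add: pi_class_def Let_def p2_def A2_def)
    define e where "e = exp (- d * rstar)"
    have ge1: "I1 / p1 \<ge> e"
    proof -
      have "0 \<le> (\<integral>r. indicator C1 r * (f r - e) \<partial>q)"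
      proof (rule Bochner_Integration.integral_nonneg)
        fix r show "0 \<le> indicator C1 r * (f r - e)"
          using True by (auto simp: C1_def f_def e_def split: split_indicator)
      qed
      also have "\<dots> = I1 - e * p1" using ind_diff(2)[OF prob C1s(2) fi] by (simp add: I1_def p1_def)
      finally show ?thesis using p1pos by (simp add: field_simps)
    qed
    have lt2: "I2 / p2 < e"
    proof -
      have "0 < (\<integral>r. indicator C2 r * (e - f r) \<partial>q)"
      proof (rule strict_pos[OF sets_q C2s(1) p2pos[unfolded p2_def]])
        have "integrable q (\<lambda>r. indicator C2 r * (f r - e))" using ind_diff(1)[OF prob C2s(2) fi] .
        then have "integrable q (\<lambda>r. - (indicator C2 r * (f r - e)))" by simp
        then show "integrable q (\<lambda>r. indicator C2 r * (e - f r))" by (simp add: algebra_simps)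
        fix r show "0 \<le> indicator C2 r * (e - f r)"
          using True by (auto simp: C2_def f_def e_def split: split_indicator)
        show "r \<in> C2 \<Longrightarrow> 0 < indicator C2 r * (e - f r)"
          using True by (auto simp: C2_def f_def e_def)
      qed
      also have "(\<integral>r. indicator C2 r * (e - f r) \<partial>q) = - (\<integral>r. indicator C2 r * (f r - e) \<partial>q)"
      proof -
        have "(\<lambda>r. indicator C2 r * (e - f r)) = (\<lambda>r. - (indicator C2 r * (f r - e)))"
          by (rule ext) (simp add: algebra_simps)
        then show ?thesis by simp
      qed
      also have "\<dots> = e * p2 - I2" using ind_diff(2)[OF prob C2s(2) fi] by (simp add: I2_def p2_def)
      finally show ?thesis using p2pos by (simp add: field_simps)
    qed
    have "A1 \<noteq> A2" using ge1 lt2 unfolding A1_def A2_def by simp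
    then show ?thesis using A1pos A2pos True m m1 m2 pc1 pc2
      by (intro exI[of _ A1] exI[of _ A2] exI[of _ d]) simp
  next
    case False
    then have d0: "d = 0" using d_nonneg by simp
    define f where "f = (\<lambda>r::real. r)"
    have fb: "f \<in> borel_measurable borel" unfolding f_def by simp
    have fi: "integrable q f" using fin_mean by (simp add: f_def)
    define I1 where "I1 = (\<integral>r. indicator C1 r * f r \<partial>q)"
    define I2 where "I2 = (\<integral>r. indicator C2 r * f r \<partial>q)"
    have L: "mean q = I1 + I2" unfolding mean_def I1_def I2_def C1_def C2_def
      using split_int[OF sets_q ae rstar fi] by (simp add: f_def)
    have L1: "mean (cond_measure q C1) = I1 / p1" unfolding mean_def I1_def p1_def
      using cond_int[OF sets_q C1s(1) p1pos[unfolded p1_def] fb] by (simp add: f_def)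
    have L2: "mean (cond_measure q C2) = I2 / p2" unfolding mean_def I2_def p2_def
      using cond_int[OF sets_q C2s(1) p2pos[unfolded p2_def] fb] by (simp add: f_def)
    define A1 where "A1 = I1 / p1"
    define A2 where "A2 = I2 / p2"
    have m1: "mu_in (cond_measure q C1) d = 1 / A1" using d0 L1 by (simp add: mu_in_def A1_def)
    have m2: "mu_in (cond_measure q C2) d = 1 / A2" using d0 L2 by (simp add: mu_in_def A2_def)
    have A1pos: "A1 > 0" using mu1 m1 unfolding C1_def by (simp add: zero_less_divide_iff)
    have A2pos: "A2 > 0" using mu2 m2 unfolding C2_def by (simp add: zero_less_divide_iff)
    have Z: "mean q = p1 * A1 + p2 * A2" unfolding L A1_def A2_def
      using p1pos p2pos by simp
    have m: "mu_in q d = 1 / (p1 * A1 + p2 * A2)" using d0 Z by (simp add: mu_in_def)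
    have pc1: "pi_class q C1 d = p1 * A1 / (p1 * A1 + p2 * A2)"
      using d0 Z L1 by (simp add: pi_class_def Let_def p1_def A1_def)
    have pc2: "pi_class q C2 d = p2 * A2 / (p1 * A1 + p2 * A2)"
      using d0 Z L2 by (simp add: pi_class_def Let_def p2_def A2_def)
    have ge1: "I1 / p1 \<le> rstar"
    proof -
      have "0 \<le> (\<integral>r. indicator C1 r * (rstar - f r) \<partial>q)"
      proof (rule Bochner_Integration.integral_nonneg)
        fix r show "0 \<le> indicator C1 r * (rstar - f r)"
          by (auto simp: C1_def f_def split: split_indicator)
      qed
      also have "(\<integral>r. indicator C1 r * (rstar - f r) \<partial>q) = - (\<integral>r. indicator C1 r * (f r - rstar) \<partial>q)"
      proof -
        have "(\<lambda>r. indicator C1 r * (rstar - f r)) = (\<lambda>r. - (indicator C1 r * (f r - rstar)))"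
          by (rule ext) (simp add: algebra_simps)
        then show ?thesis by simp
      qed
      also have "\<dots> = rstar * p1 - I1" using ind_diff(2)[OF prob C1s(2) fi] by (simp add: I1_def p1_def)
      finally show ?thesis using p1pos by (simp add: field_simps)
    qed
    have lt2: "I2 / p2 > rstar"
    proof -
      have "0 < (\<integral>r. indicator C2 r * (f r - rstar) \<partial>q)"
      proof (rule strict_pos[OF sets_q C2s(1) p2pos[unfolded p2_def]])
        show "integrable q (\<lambda>r. indicator C2 r * (f r - rstar))" using ind_diff(1)[OF prob C2s(2) fi] .
        fix r show "0 \<le> indicator C2 r * (f r - rstar)"
          by (auto simp: C2_def f_def split: split_indicator)
        show "r \<in> C2 \<Longrightarrow> 0 < indicator C2 r * (f r - rstar)"
          by (auto simp: C2_def f_def)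
      qed
      also have "\<dots> = I2 - rstar * p2" using ind_diff(2)[OF prob C2s(2) fi] by (simp add: I2_def p2_def)
      finally show ?thesis using p2pos by (simp add: field_simps)
    qed
    have "A1 \<noteq> A2" using ge1 lt2 unfolding A1_def A2_def by simp
    then show ?thesis using A1pos A2pos m m1 m2 pc1 pc2
      by (intro exI[of _ A1] exI[of _ A2] exI[of _ 1]) simp
  qed
  then obtain A1 A2 c where A: "A1 > 0" "A2 > 0" "c > 0" "A1 \<noteq> A2"
    and m: "mu_in q d = c / (p1 * A1 + p2 * A2)"
    and m1: "mu_in (cond_measure q C1) d = c / A1" and m2: "mu_in (cond_measure q C2) d = c / A2"
    and pc1: "pi_class q C1 d = p1 * A1 / (p1 * A1 + p2 * A2)"
    and pc2: "pi_class q C2 d = p2 * A2 / (p1 * A1 + p2 * A2)" by blast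
  note br = bridge[OF p1pos p2pos psum A(1,2,3)]
  show ?thesis
  proof (rule core[OF \<alpha>I \<beta>_pos \<gamma>_pos _ _ _ _ _ _ x1_nonneg x2_nonneg])
    show "0 < mu_in (cond_measure q C1) d" using mu1 by (simp add: C1_def)
    show "0 < mu_in (cond_measure q C2) d" using mu2 by (simp add: C2_def)
    show "mu_in (cond_measure q C1) d \<noteq> mu_in (cond_measure q C2) d" using m1 m2 br(5) A(4) by simp
    show "0 < pi_class q C1 d" using pc1 br by simp
    show "0 < pi_class q C2 d" using pc2 br by simp
    show "pi_class q C1 d + pi_class q C2 d = 1" using pc1 pc2 br by simp
    show "mu_in q d = pi_class q C1 d * mu_in (cond_measure q C1) d + pi_class q C2 d * mu_in (cond_measure q C2) d"
      using m m1 m2 pc1 pc2 br(2) by simp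
    show "\<alpha>I * pi_class q C1 d * mu_in (cond_measure q C1) d
              + \<beta> * (x1 + x2) * (pi_class q C1 d - x1)
              - (\<gamma> + mu_in (cond_measure q C1) d) * x1 = 0"
      unfolding C1_def by (rule eq1)
    show "\<alpha>I * pi_class q C2 d * mu_in (cond_measure q C2) d
              + \<beta> * (x1 + x2) * (pi_class q C2 d - x2)
              - (\<gamma> + mu_in (cond_measure q C2) d) * x2 = 0"
      unfolding C2_def by (rule eq2)
  qed
qed

end
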